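(* Let $c\in\mathbb{N}$ and $I=\mathbb{N}\times[c]$. Then every $\mathrm{Sym}$-invariant lattice $L\subseteq\mathbb{Z}^{(I)}$ has a finite equivariant Graver basis, i.e. there is a finite set $\mathcal{G}\subseteq L$ such that $\mathrm{Sym}(\mathcal{G})=\{\sigma(\mathbf{u})\mid\sigma\in\mathrm{Sym},\mathbf{u}\in\mathcal{G}\}$ is the Graver basis of $L$.
   Context: $\mathbb{N}=\{1,2,\dots\}$, $[c]=\{1,\dots,c\}$. For a set $J$, $\mathbb{Z}^{(J)}$ is the free abelian group with basis $J$, i.e. finitely supported integer vectors $\mathbf{u}=(u_j)_{j\in J}$; a lattice is any subgroup of $\mathbb{Z}^{(J)}$. Define the partial order $\mathbf{u}\sqsubseteq\mathbf{v}$ iff $u_jv_j\ge0$ and $|u_j|\le|v_j|$ for all $j\in J$. The Graver basis of a lattice $L$ is the set of all $\sqsubseteq$-minimal elements of $L\setminus\{\mathbf{0}\}$. $\mathrm{Sym}$ denotes the group of permutations of $\mathbb{N}$ fixing all but finitely many elements. It acts on $\mathbb{Z}^{(\mathbb{N}\times[c])}$ by the linear extension of $\sigma(\mathbf{e}_{i,j})=\mathbf{e}_{\sigma(i),j}$, where $\mathbf{e}_{i,j}$ are the standard basis vectors. A lattice $L$ is $\mathrm{Sym}$-invariant if $\sigma(L)\subseteq L$ for all $\sigma\in\mathrm{Sym}$. *)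

theory Defs
  imports Main
begin

text \<open>Index set I = N x [c] with N = {1,2,...}; integer vectors are functions
  nat \<times> nat \<Rightarrow> int; Z^(I) = finitely supported ones with support inside I.\<close>

definition idx :: "nat \<Rightarrow> (nat \<times> nat) set" where
  "idx c = {(i, j). 1 \<le> i \<and> 1 \<le> j \<and> j \<le> c}"

definition ZI :: "nat \<Rightarrow> (nat \<times> nat \<Rightarrow> int) set" where
  "ZI c = {u. finite {x. u x \<noteq> 0} \<and> {x. u x \<noteq> 0} \<subseteq> idx c}"

definition is_lattice :: "nat \<Rightarrow> (nat \<times> nat \<Rightarrow> int) set \<Rightarrow> bool" where
  "is_lattice c L \<longleftrightarrow> L \<subseteq> ZI c \<and> (\<lambda>_. 0) \<in> L \<and>
     (\<forall>u\<in>L. \<forall>v\<in>L. (\<lambda>x. u x + v x) \<in> L) \<and> (\<forall>u\<in>L. (\<lambda>x. - u x) \<in> L)"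

text \<open>Sym: permutations of N = {1,2,...} fixing all but finitely many elements
  (represented as bijections of nat fixing 0).\<close>
definition Sym :: "(nat \<Rightarrow> nat) set" where
  "Sym = {\<sigma>. bij \<sigma> \<and> \<sigma> 0 = 0 \<and> finite {i. \<sigma> i \<noteq> i}}"

text \<open>Action: linear extension of sigma(e_(i,j)) = e_(sigma i, j), i.e.
  (sigma u)(i,j) = u(sigma^-1 i, j).\<close>
definition perm_act :: "(nat \<Rightarrow> nat) \<Rightarrow> (nat \<times> nat \<Rightarrow> int) \<Rightarrow> (nat \<times> nat \<Rightarrow> int)" where
  "perm_act \<sigma> u = (\<lambda>(i, j). u (inv \<sigma> i, j))"

definition sym_invariant :: "(nat \<times> nat \<Rightarrow> int) set \<Rightarrow> bool" where
  "sym_invariant L \<longleftrightarrow> (\<forall>\<sigma>\<in>Sym. \<forall>u\<in>L. perm_act \<sigma> u \<in> L)"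

definition conformal_le :: "(nat \<times> nat \<Rightarrow> int) \<Rightarrow> (nat \<times> nat \<Rightarrow> int) \<Rightarrow> bool" where
  "conformal_le u v \<longleftrightarrow> (\<forall>x. u x * v x \<ge> 0 \<and> \<bar>u x\<bar> \<le> \<bar>v x\<bar>)"

definition graver :: "(nat \<times> nat \<Rightarrow> int) set \<Rightarrow> (nat \<times> nat \<Rightarrow> int) set" where
  "graver L = {u \<in> L - {\<lambda>_. 0}. \<not> (\<exists>v \<in> L - {\<lambda>_. 0}. conformal_le v u \<and> v \<noteq> u)}"

end

theory Submission
  imports Defs "HOL-Library.Ramsey" "HOL-Library.Sublist" "HOL-Combinatorics.Permutations"
begin

definition good :: "('a \<Rightarrow> 'a \<Rightarrow> bool) \<Rightarrow> (nat \<Rightarrow> 'a) \<Rightarrow> bool" where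
  "good P f \<longleftrightarrow> (\<exists>i j. i < j \<and> P (f i) (f j))"

definition wqo_on :: "('a \<Rightarrow> 'a \<Rightarrow> bool) \<Rightarrow> 'a set \<Rightarrow> bool" where
  "wqo_on P A \<longleftrightarrow> (\<forall>f. (\<forall>i. f i \<in> A) \<longrightarrow> good P f)"

definition bad_ext :: "('a \<Rightarrow> 'a \<Rightarrow> bool) \<Rightarrow> 'a set \<Rightarrow> 'a list list \<Rightarrow> 'a list \<Rightarrow> bool" where
  "bad_ext P A pre x \<longleftrightarrow> (\<exists>g. (\<forall>i. g i \<in> lists A) \<and> \<not> good (list_emb P) g \<and>
      (\<forall>i<length pre. g i = pre ! i) \<and> g (length pre) = x)"

definition mchoose :: "('a \<Rightarrow> 'a \<Rightarrow> bool) \<Rightarrow> 'a set \<Rightarrow> 'a list list \<Rightarrow> 'a list" where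
  "mchoose P A pre = (SOME x. bad_ext P A pre x \<and> (\<forall>y. bad_ext P A pre y \<longrightarrow> length x \<le> length y))"

fun mbs :: "('a \<Rightarrow> 'a \<Rightarrow> bool) \<Rightarrow> 'a set \<Rightarrow> nat \<Rightarrow> 'a list list" where
  "mbs P A 0 = []"
| "mbs P A (Suc n) = mbs P A n @ [mchoose P A (mbs P A n)]"

lemma length_mbs [simp]: "length (mbs P A n) = n"
  by (induction n) auto

lemma mbs_nth: "i < n \<Longrightarrow> mbs P A n ! i = mbs P A (Suc i) ! i"
proof (induction n)
  case 0 then show ?case by simp
next
  case (Suc n)
  then show ?case by (cases "i < n") (auto simp: nth_append less_Suc_eq)
qed

lemma mbs_inv:
  assumes ex: "\<exists>g. (\<forall>i. g i \<in> lists A) \<and> \<not> good (list_emb P) g"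
  shows "(\<exists>g. (\<forall>i. g i \<in> lists A) \<and> \<not> good (list_emb P) g \<and> (\<forall>i<n. g i = mbs P A n ! i))
     \<and> bad_ext P A (mbs P A n) (mchoose P A (mbs P A n))
     \<and> (\<forall>y. bad_ext P A (mbs P A n) y \<longrightarrow> length (mchoose P A (mbs P A n)) \<le> length y)"
proof (induction n)
  case 0
  have A: "\<exists>g. (\<forall>i. g i \<in> lists A) \<and> \<not> good (list_emb P) g \<and> (\<forall>i<0. g i = mbs P A 0 ! i)"
    using ex by auto
  then obtain g where "(\<forall>i. g i \<in> lists A) \<and> \<not> good (list_emb P) g" by blast
  then have "bad_ext P A (mbs P A 0) (g 0)" unfolding bad_ext_def by auto
  then have "\<exists>x. bad_ext P A (mbs P A 0) x \<and> (\<forall>y. bad_ext P A (mbs P A 0) y \<longrightarrow> length x \<le> length y)"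
    by (rule ex_has_least_nat)
  then have "bad_ext P A (mbs P A 0) (mchoose P A (mbs P A 0))
     \<and> (\<forall>y. bad_ext P A (mbs P A 0) y \<longrightarrow> length (mchoose P A (mbs P A 0)) \<le> length y)"
    unfolding mchoose_def by (rule someI_ex)
  with A show ?case by blast
next
  case (Suc n)
  then obtain g where g: "\<forall>i. g i \<in> lists A" "\<not> good (list_emb P) g"
     "\<forall>i<length (mbs P A n). g i = mbs P A n ! i" "g (length (mbs P A n)) = mchoose P A (mbs P A n)"
    unfolding bad_ext_def by blast
  have A: "\<exists>g. (\<forall>i. g i \<in> lists A) \<and> \<not> good (list_emb P) g \<and> (\<forall>i<Suc n. g i = mbs P A (Suc n) ! i)"
    using g by (intro exI[of _ g]) (auto simp: nth_append less_Suc_eq)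
  then obtain g where g: "\<forall>i. g i \<in> lists A" "\<not> good (list_emb P) g" "\<forall>i<Suc n. g i = mbs P A (Suc n) ! i" by blast
  then have "bad_ext P A (mbs P A (Suc n)) (g (Suc n))" unfolding bad_ext_def by auto
  then have "\<exists>x. bad_ext P A (mbs P A (Suc n)) x \<and> (\<forall>y. bad_ext P A (mbs P A (Suc n)) y \<longrightarrow> length x \<le> length y)"
    by (rule ex_has_least_nat)
  then have "bad_ext P A (mbs P A (Suc n)) (mchoose P A (mbs P A (Suc n)))
     \<and> (\<forall>y. bad_ext P A (mbs P A (Suc n)) y \<longrightarrow> length (mchoose P A (mbs P A (Suc n))) \<le> length y)"
    unfolding mchoose_def by (rule someI_ex)
  with A show ?case by blast
qed

lemma wqo_chain:
  fixes f :: "nat \<Rightarrow> 'a"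
  assumes w: "wqo_on P A" and f: "\<And>i. f i \<in> A"
  shows "\<exists>\<phi>::nat\<Rightarrow>nat. strict_mono \<phi> \<and> (\<forall>i j. i < j \<longrightarrow> P (f (\<phi> i)) (f (\<phi> j)))"
proof -
  define col where "col X = (if P (f (Min X)) (f (Max X)) then 0 else (1::nat))" for X :: "nat set"
  have "\<forall>x\<in>(UNIV::nat set). \<forall>y\<in>UNIV. x \<noteq> y \<longrightarrow> col {x, y} < 2" by (simp add: col_def)
  from Ramsey2[OF infinite_UNIV_nat this] obtain Y t where
    Y: "infinite Y" "t < 2" "\<forall>x\<in>Y. \<forall>y\<in>Y. x \<noteq> y \<longrightarrow> col {x, y} = t" by blast
  define \<phi> where "\<phi> = enumerate Y"
  have sm: "strict_mono \<phi>" unfolding \<phi>_def strict_mono_def using enumerate_mono Y(1) by blast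
  have ct: "col {\<phi> i, \<phi> j} = t" if "i < j" for i j
  proof -
    have "\<phi> i \<in> Y" "\<phi> j \<in> Y" by (simp_all add: \<phi>_def enumerate_in_set Y(1))
    moreover have "\<phi> i < \<phi> j" using sm that by (simp add: strict_mono_less)
    ultimately show ?thesis using Y(3) by auto
  qed
  have cP: "col {\<phi> i, \<phi> j} = 0 \<longleftrightarrow> P (f (\<phi> i)) (f (\<phi> j))" if "i < j" for i j
  proof -
    have "\<phi> i < \<phi> j" using sm that by (simp add: strict_mono_less)
    then have "Min {\<phi> i, \<phi> j} = \<phi> i" "Max {\<phi> i, \<phi> j} = \<phi> j" by auto
    then show ?thesis by (simp add: col_def)
  qed
  show ?thesis
  proof (cases "t = 0")
    case True
    show ?thesis
    proof (intro exI[of _ \<phi>] conjI sm allI impI)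
      fix i j :: nat assume "i < j"
      then show "P (f (\<phi> i)) (f (\<phi> j))" using ct cP True by simp
    qed
  next
    case False
    have "good P (f \<circ> \<phi>)" using w f unfolding wqo_on_def by auto
    then obtain i j where ij: "i < j" "P (f (\<phi> i)) (f (\<phi> j))" unfolding good_def by auto
    then show ?thesis using ct[OF ij(1)] cP[OF ij(1)] False by simp
  qed
qed

lemma higman:
  assumes w: "wqo_on P A"
  shows "wqo_on (list_emb P) (lists A)"
proof (rule ccontr)
  assume "\<not> wqo_on (list_emb P) (lists A)"
  then have ex: "\<exists>g. (\<forall>i. g i \<in> lists A) \<and> \<not> good (list_emb P) g" unfolding wqo_on_def by blast
  define m where "m i = mbs P A (Suc i) ! i" for i
  have pre: "mbs P A n ! i = m i" if "i < n" for n i using mbs_nth[OF that] m_def by simp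
  have badm: "m i \<in> lists A \<and> (i < j \<longrightarrow> \<not> list_emb P (m i) (m j))" for i j
  proof -
    obtain g where g: "\<forall>i. g i \<in> lists A" "\<not> good (list_emb P) g" "\<forall>k<Suc (max i j). g k = mbs P A (Suc (max i j)) ! k"
      using mbs_inv[OF ex, of "Suc (max i j)"] by blast
    have gi: "g i = m i" using g(3) pre[of i "Suc (max i j)"] by (simp del: mbs.simps)
    have gj: "g j = m j" using g(3) pre[of j "Suc (max i j)"] by (simp del: mbs.simps)
    show ?thesis using g(1,2) gi gj unfolding good_def by metis
  qed
  have minm: "length (m n) \<le> length (g n)"
    if "\<forall>i. g i \<in> lists A" "\<not> good (list_emb P) g" "\<forall>i<n. g i = m i" for g n
  proof -
    have "bad_ext P A (mbs P A n) (g n)" unfolding bad_ext_def using that pre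
      by (intro exI[of _ g]) auto
    moreover have "m n = mchoose P A (mbs P A n)" unfolding m_def by (simp add: nth_append)
    ultimately show ?thesis using mbs_inv[OF ex, of n] by auto
  qed
  have ne: "m i \<noteq> []" for i
  proof
    assume "m i = []"
    then have "list_emb P (m i) (m (Suc i))" by simp
    then show False using badm by blast
  qed
  define h where "h i = hd (m i)" for i
  have hA: "h i \<in> A" for i using badm[of i] ne[of i] unfolding h_def by (cases "m i") auto
  obtain \<phi> :: "nat \<Rightarrow> nat" where sm: "strict_mono \<phi>" and ch: "\<forall>i j. i < j \<longrightarrow> P (h (\<phi> i)) (h (\<phi> j))"
    using wqo_chain[of P A h, OF w hA] by blast
  define g where "g i = (if i < \<phi> 0 then m i else tl (m (\<phi> (i - \<phi> 0))))" for i
  have tlA: "xs \<in> lists A \<Longrightarrow> tl xs \<in> lists A" for xs by (cases xs) auto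
  have mA: "m i \<in> lists A" for i using badm by blast
  have gA: "\<forall>i. g i \<in> lists A" by (simp add: g_def mA tlA)
  have "\<not> length (m (\<phi> 0)) \<le> length (g (\<phi> 0))"
    using ne[of "\<phi> 0"] by (cases "m (\<phi> 0)") (simp_all add: g_def)
  moreover have gpre: "\<forall>i<\<phi> 0. g i = m i" by (simp add: g_def)
  ultimately have "good (list_emb P) g" using minm[of g "\<phi> 0"] gA by blast
  then obtain i j where ij: "i < j" "list_emb P (g i) (g j)" unfolding good_def by blast
  have tlD: "list_emb P xs (tl ys) \<Longrightarrow> ys \<noteq> [] \<Longrightarrow> list_emb P xs ys" for xs ys
    by (cases ys) auto
  have mono0: "\<phi> 0 \<le> \<phi> k" for k using sm by (simp add: strict_mono_less_eq)
  show False
  proof (cases "j < \<phi> 0")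
    case True
    then have "g i = m i" "g j = m j" using ij(1) by (simp_all add: g_def)
    then show False using ij badm[of i j] by simp
  next
    case jge: False
    show False
    proof (cases "i < \<phi> 0")
      case True
      then have "list_emb P (m i) (m (\<phi> (j - \<phi> 0)))" using ij jge tlD ne unfolding g_def by auto
      moreover have "i < \<phi> (j - \<phi> 0)" using True mono0[of "j - \<phi> 0"] by simp
      ultimately show False using badm by blast
    next
      case False
      define a where "a = i - \<phi> 0"
      define b where "b = j - \<phi> 0"
      have ab: "a < b" using ij(1) False unfolding a_def b_def by simp
      have e: "list_emb P (tl (m (\<phi> a))) (tl (m (\<phi> b)))" using ij False jge unfolding g_def a_def b_def by auto
      have "P (hd (m (\<phi> a))) (hd (m (\<phi> b)))" using ch ab unfolding h_def by blast
      then have "list_emb P (m (\<phi> a)) (m (\<phi> b))" using e ne[of "\<phi> a"] ne[of "\<phi> b"]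
        by (cases "m (\<phi> a)"; cases "m (\<phi> b)") auto
      moreover have "\<phi> a < \<phi> b" using sm ab by (simp add: strict_mono_less)
      ultimately show False using badm by blast
    qed
  qed
qed


definition conf :: "(nat \<Rightarrow> int) \<Rightarrow> (nat \<Rightarrow> int) \<Rightarrow> bool" where
  "conf x y \<longleftrightarrow> (\<forall>j. x j * y j \<ge> 0 \<and> \<bar>x j\<bar> \<le> \<bar>y j\<bar>)"

definition colA :: "nat set \<Rightarrow> (nat \<Rightarrow> int) set" where
  "colA J = {x. \<forall>j. j \<notin> J \<longrightarrow> x j = 0}"

lemma nat_seq_good: fixes g :: "nat \<Rightarrow> nat" shows "\<exists>i j. i < j \<and> g i \<le> g j"
proof -
  obtain i where "\<forall>y. g i \<le> g y" using ex_has_least_nat[of "\<lambda>_. True" 0 g] by auto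
  then show ?thesis by (intro exI[of _ i] exI[of _ "Suc i"]) auto
qed

lemma int_seq_good: fixes z :: "nat \<Rightarrow> int" shows "\<exists>i j. i < j \<and> z i * z j \<ge> 0 \<and> \<bar>z i\<bar> \<le> \<bar>z j\<bar>"
proof (cases "finite {i. z i \<ge> 0}")
  case False
  define e where "e = enumerate {i. z i \<ge> 0}"
  have e: "z (e k) \<ge> 0" for k using enumerate_in_set[OF False] unfolding e_def by auto
  obtain k l where kl: "k < l" "nat (z (e k)) \<le> nat (z (e l))" using nat_seq_good[of "\<lambda>k. nat (z (e k))"] by blast
  have "e k < e l" using kl(1) False unfolding e_def by (simp add: enumerate_mono)
  moreover have "z (e k) * z (e l) \<ge> 0" "\<bar>z (e k)\<bar> \<le> \<bar>z (e l)\<bar>" using e[of k] e[of l] kl(2) by auto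
  ultimately show ?thesis by blast
next
  case True
  have inf: "infinite {i. \<not> z i \<ge> 0}"
  proof
    assume "finite {i. \<not> z i \<ge> 0}"
    with True have "finite ({i. z i \<ge> 0} \<union> {i. \<not> z i \<ge> 0})" by simp
    moreover have "{i. z i \<ge> 0} \<union> {i. \<not> z i \<ge> 0} = UNIV" by auto
    ultimately show False by simp
  qed
  define e where "e = enumerate {i. \<not> z i \<ge> 0}"
  have e: "z (e k) < 0" for k using enumerate_in_set[OF inf, of k] unfolding e_def by simp
  obtain k l where kl: "k < l" "nat (- z (e k)) \<le> nat (- z (e l))" using nat_seq_good[of "\<lambda>k. nat (- z (e k))"] by blast
  have "e k < e l" using kl(1) inf unfolding e_def by (simp add: enumerate_mono)
  moreover have "z (e k) * z (e l) \<ge> 0" "\<bar>z (e k)\<bar> \<le> \<bar>z (e l)\<bar>" using e[of k] e[of l] kl(2)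
    by (auto simp: zero_le_mult_iff)
  ultimately show ?thesis by blast
qed

lemma colA_wqo:
  assumes "finite J"
  shows "wqo_on conf (colA J)"
  using assms
proof (induction J rule: finite_induct)
  case empty
  show ?case unfolding wqo_on_def good_def
  proof (intro allI impI)
    fix f :: "nat \<Rightarrow> nat \<Rightarrow> int" assume "\<forall>i. f i \<in> colA {}"
    then have "f 0 = f 1" by (auto simp: colA_def)
    then show "\<exists>i j. i < j \<and> conf (f i) (f j)" by (intro exI[of _ 0] exI[of _ 1]) (auto simp: conf_def)
  qed
next
  case (insert a J)
  show ?case unfolding wqo_on_def
  proof (intro allI impI)
    fix f :: "nat \<Rightarrow> nat \<Rightarrow> int" assume f: "\<forall>i. f i \<in> colA (insert a J)"
    define f' where "f' i = (f i)(a := 0)" for i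
    have f': "f' i \<in> colA J" for i using f unfolding f'_def colA_def by auto
    obtain \<phi> :: "nat \<Rightarrow> nat" where sm: "strict_mono \<phi>" and ch: "\<forall>i j. i < j \<longrightarrow> conf (f' (\<phi> i)) (f' (\<phi> j))"
      using wqo_chain[of conf "colA J" f', OF insert.IH f'] by blast
    obtain i j where ij: "i < j" "f (\<phi> i) a * f (\<phi> j) a \<ge> 0" "\<bar>f (\<phi> i) a\<bar> \<le> \<bar>f (\<phi> j) a\<bar>"
      using int_seq_good[of "\<lambda>i. f (\<phi> i) a"] by blast
    have "conf (f (\<phi> i)) (f (\<phi> j))" unfolding conf_def
    proof
      fix k
      show "f (\<phi> i) k * f (\<phi> j) k \<ge> 0 \<and> \<bar>f (\<phi> i) k\<bar> \<le> \<bar>f (\<phi> j) k\<bar>"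
      proof (cases "k = a")
        case True then show ?thesis using ij by simp
      next
        case False
        then show ?thesis using ch ij(1) unfolding conf_def f'_def by (metis fun_upd_other)
      qed
    qed
    moreover have "\<phi> i < \<phi> j" using sm ij(1) by (simp add: strict_mono_less)
    ultimately show "good conf f" unfolding good_def by blast
  qed
qed


lemma list_emb_idx:
  assumes "list_emb P xs ys"
  shows "\<exists>h. (\<forall>i j. i < j \<and> j < length xs \<longrightarrow> h i < h j) \<and>
             (\<forall>i<length xs. h i < length ys \<and> P (xs ! i) (ys ! h i))"
  using assms
proof (induction rule: list_emb.induct)
  case (list_emb_Nil ys)
  then show ?case by auto
next
  case (list_emb_Cons xs ys y)
  then obtain h where h: "\<forall>i j. i < j \<and> j < length xs \<longrightarrow> h i < h j"
    "\<forall>i<length xs. h i < length ys \<and> P (xs ! i) (ys ! h i)" by blast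
  show ?case
    by (rule exI[of _ "\<lambda>i. Suc (h i)"]) (use h in auto)
next
  case (list_emb_Cons2 x y xs ys)
  then obtain h where h: "\<forall>i j. i < j \<and> j < length xs \<longrightarrow> h i < h j"
    "\<forall>i<length xs. h i < length ys \<and> P (xs ! i) (ys ! h i)" by blast
  define h' where "h' i = (case i of 0 \<Rightarrow> 0 | Suc k \<Rightarrow> Suc (h k))" for i
  have 1: "h' i < h' j" if ij: "i < j" "j < length (x # xs)" for i j
  proof (cases i)
    case 0
    then show ?thesis using ij by (cases j) (auto simp: h'_def)
  next
    case (Suc k)
    then obtain l where l: "j = Suc l" using ij by (cases j) auto
    then show ?thesis using ij h(1) Suc by (auto simp: h'_def)
  qed
  have 2: "h' i < length (y # ys) \<and> P ((x # xs) ! i) ((y # ys) ! h' i)" if "i < length (x # xs)" for i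
  proof (cases i)
    case 0
    then show ?thesis using list_emb_Cons2 by (auto simp: h'_def)
  next
    case (Suc k)
    then show ?thesis using that h(2) by (auto simp: h'_def)
  qed
  show ?case using 1 2 by blast
qed

lemma perm_ext:
  fixes g :: "nat \<Rightarrow> nat"
  assumes S: "finite S" and inj: "inj_on g S" and z: "0 \<notin> S" "0 \<notin> g ` S"
  shows "\<exists>\<sigma>\<in>Sym. \<forall>k\<in>S. \<sigma> k = g k"
proof -
  define T where "T = g ` S"
  have T: "finite T" using S unfolding T_def by simp
  have cT: "card T = card S" unfolding T_def using card_image[OF inj] .
  have "card (T - S) = card (S - T)"
    using card_Diff_subset_Int[of "T \<inter> S" T] card_Diff_subset_Int[of "S \<inter> T" S] S T cT
    by (simp add: Diff_Int2 Int_commute card_Diff_subset_Int)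
  then obtain b where b: "bij_betw b (T - S) (S - T)"
    using finite_same_card_bij[of "T - S" "S - T"] S T by auto
  define \<sigma> where "\<sigma> k = (if k \<in> S then g k else if k \<in> T then b k else k)" for k
  have b1: "bij_betw \<sigma> S T"
    using inj unfolding T_def bij_betw_def \<sigma>_def inj_on_def by auto
  have b2: "bij_betw \<sigma> (T - S) (S - T)"
    using b by (rule bij_betw_cong[THEN iffD1, rotated]) (auto simp: \<sigma>_def)
  have "bij_betw \<sigma> (S \<union> (T - S)) (T \<union> (S - T))"
    by (rule bij_betw_combine[OF b1 b2]) auto
  moreover have "S \<union> (T - S) = S \<union> T" "T \<union> (S - T) = S \<union> T" by auto
  ultimately have bb: "bij_betw \<sigma> (S \<union> T) (S \<union> T)" by simp
  have out: "\<sigma> x = x" if "x \<notin> S \<union> T" for x using that by (simp add: \<sigma>_def)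
  have "\<sigma> permutes (S \<union> T)" by (rule bij_imp_permutes[OF bb out])
  then have "bij \<sigma>" by (rule permutes_bij)
  moreover have "0 \<notin> T" using z unfolding T_def by simp
  then have "\<sigma> 0 = 0" using z by (simp add: \<sigma>_def)
  moreover have "finite {i. \<sigma> i \<noteq> i}"
    by (rule finite_subset[of _ "S \<union> T"]) (use out S T in auto)
  ultimately have "\<sigma> \<in> Sym" unfolding Sym_def by blast
  moreover have "\<forall>k\<in>S. \<sigma> k = g k" by (simp add: \<sigma>_def)
  ultimately show ?thesis by blast
qed

definition nb :: "(nat \<times> nat \<Rightarrow> int) \<Rightarrow> nat" where
  "nb u = (SOME n. \<forall>i j. u (i, j) \<noteq> 0 \<longrightarrow> i \<le> n)"

definition cols :: "(nat \<times> nat \<Rightarrow> int) \<Rightarrow> (nat \<Rightarrow> int) list" where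
  "cols u = map (\<lambda>i j. u (i, j)) [1..<Suc (nb u)]"

lemma nb_prop:
  assumes "u \<in> ZI c"
  shows "u (i, j) \<noteq> 0 \<Longrightarrow> i \<le> nb u"
proof -
  have fin: "finite {x. u x \<noteq> 0}" using assms unfolding ZI_def by auto
  have "\<exists>n. \<forall>i j. u (i, j) \<noteq> 0 \<longrightarrow> i \<le> n"
  proof (intro exI allI impI)
    fix i j assume "u (i, j) \<noteq> 0"
    then have "i \<in> fst ` {x. u x \<noteq> 0}" by force
    then show "i \<le> Max (fst ` {x. u x \<noteq> 0})" using fin by simp
  qed
  then have "\<forall>i j. u (i, j) \<noteq> 0 \<longrightarrow> i \<le> nb u" unfolding nb_def by (rule someI_ex)
  then show "u (i, j) \<noteq> 0 \<Longrightarrow> i \<le> nb u" by blast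
qed

lemma ZI_zero:
  assumes "u \<in> ZI c" "i = 0 \<or> j = 0 \<or> j > c"
  shows "u (i, j) = 0"
  using assms unfolding ZI_def idx_def by auto

lemma cols_lists: "u \<in> ZI c \<Longrightarrow> cols u \<in> lists (colA {1..c})"
  unfolding cols_def colA_def using ZI_zero[of u c] by auto

lemma length_cols [simp]: "length (cols u) = nb u"
  by (simp add: cols_def)

lemma nth_cols: "i < nb u \<Longrightarrow> cols u ! i = (\<lambda>j. u (Suc i, j))"
  unfolding cols_def by (simp del: upt_Suc)

lemma emb_perm:
  assumes u: "u \<in> ZI c" and v: "v \<in> ZI c" and e: "list_emb conf (cols u) (cols v)"
  shows "\<exists>\<sigma>\<in>Sym. conformal_le (perm_act \<sigma> u) v"
proof -
  obtain h where h1: "\<forall>i j. i < j \<and> j < nb u \<longrightarrow> h i < h j"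
    and h2: "\<forall>i<nb u. h i < nb v \<and> conf (cols u ! i) (cols v ! h i)"
    using list_emb_idx[OF e] by auto
  define S where "S = {1..nb u}"
  define g where "g k = Suc (h (k - 1))" for k
  have inj: "inj_on g S"
  proof
    fix x y assume xy: "x \<in> S" "y \<in> S" "g x = g y"
    have lt: "g a < g b" if "a \<in> S" "b \<in> S" "a < b" for a b
    proof -
      have "a - 1 < b - 1" "b - 1 < nb u" using that unfolding S_def by auto
      then have "h (a - 1) < h (b - 1)" using h1 by blast
      then show ?thesis unfolding g_def by simp
    qed
    show "x = y"
    proof (rule ccontr)
      assume "x \<noteq> y"
      then have "x < y \<or> y < x" by auto
      then show False using lt[of x y] lt[of y x] xy by auto
    qed
  qed
  obtain \<sigma> where s: "\<sigma> \<in> Sym" and sg: "\<forall>k\<in>S. \<sigma> k = g k"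
    using perm_ext[of S g] inj unfolding S_def g_def by auto
  have bij: "bij \<sigma>" using s unfolding Sym_def by auto
  have "conformal_le (perm_act \<sigma> u) v" unfolding conformal_le_def
  proof
    fix x :: "nat \<times> nat"
    obtain k' j where x: "x = (k', j)" by (cases x)
    define k where "k = inv \<sigma> k'"
    have sk: "\<sigma> k = k'" unfolding k_def using bij by (meson bij_inv_eq_iff)
    have pa: "perm_act \<sigma> u x = u (k, j)" unfolding perm_act_def x k_def by simp
    show "perm_act \<sigma> u x * v x \<ge> 0 \<and> \<bar>perm_act \<sigma> u x\<bar> \<le> \<bar>v x\<bar>"
    proof (cases "k \<in> S")
      case True
      then have k': "k' = Suc (h (k - 1))" using sg sk unfolding g_def by auto
      have "k - 1 < nb u" using True unfolding S_def by auto
      then have "conf (\<lambda>j. u (Suc (k - 1), j)) (\<lambda>j. v (Suc (h (k - 1)), j))"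
        using h2 nth_cols by metis
      moreover have "Suc (k - 1) = k" using True unfolding S_def by auto
      ultimately have "u (k, j) * v (k', j) \<ge> 0 \<and> \<bar>u (k, j)\<bar> \<le> \<bar>v (k', j)\<bar>"
        unfolding conf_def k' by metis
      then show ?thesis using pa x by simp
    next
      case False
      then have "u (k, j) = 0" using nb_prop[OF u, of k j] ZI_zero[OF u, of k j] unfolding S_def by force
      then show ?thesis using pa by simp
    qed
  qed
  then show ?thesis using s by blast
qed


lemma Sym_inv:
  assumes s: "\<sigma> \<in> Sym"
  shows "inv \<sigma> \<in> Sym"
proof -
  have b: "bij \<sigma>" "\<sigma> 0 = 0" "finite {i. \<sigma> i \<noteq> i}" using s unfolding Sym_def by auto
  have "bij (inv \<sigma>)" using b(1) by (simp add: bij_imp_bij_inv)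
  moreover have "inv \<sigma> 0 = 0" using b by (metis bij_inv_eq_iff)
  moreover have "{i. inv \<sigma> i \<noteq> i} \<subseteq> \<sigma> ` {i. \<sigma> i \<noteq> i}"
  proof
    fix i assume "i \<in> {i. inv \<sigma> i \<noteq> i}"
    moreover have "\<sigma> (inv \<sigma> i) = i" using b(1) by (meson bij_inv_eq_iff)
    ultimately show "i \<in> \<sigma> ` {i. \<sigma> i \<noteq> i}" by (metis (mono_tags, lifting) image_eqI mem_Collect_eq)
  qed
  then have "finite {i. inv \<sigma> i \<noteq> i}" using b(3) finite_subset by blast
  ultimately show ?thesis unfolding Sym_def by blast
qed

lemma perm_act_inv:
  assumes s: "\<sigma> \<in> Sym"
  shows "perm_act (inv \<sigma>) (perm_act \<sigma> u) = u"
proof -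
  have b: "bij \<sigma>" using s unfolding Sym_def by auto
  have "inv (inv \<sigma>) = \<sigma>" using b by (simp add: inv_inv_eq)
  moreover have "inv \<sigma> (\<sigma> i) = i" for i using b by (simp add: bij_is_inj)
  ultimately show ?thesis unfolding perm_act_def by (auto simp: fun_eq_iff)
qed

lemma perm_act_conf:
  "conformal_le w u \<Longrightarrow> conformal_le (perm_act \<sigma> w) (perm_act \<sigma> u)"
  unfolding conformal_le_def perm_act_def by auto

lemma perm_act_zero: "perm_act \<sigma> (\<lambda>_. 0) = (\<lambda>_. 0)"
  unfolding perm_act_def by auto

lemma graver_sub: "graver L \<subseteq> L"
  unfolding graver_def by auto

lemma graver_inv:
  assumes si: "sym_invariant L" and s: "\<sigma> \<in> Sym" and u: "u \<in> graver L"
  shows "perm_act \<sigma> u \<in> graver L"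
proof -
  have uL: "u \<in> L" "u \<noteq> (\<lambda>_. 0)" and um: "\<not> (\<exists>v \<in> L - {\<lambda>_. 0}. conformal_le v u \<and> v \<noteq> u)"
    using u unfolding graver_def by auto
  have "perm_act \<sigma> u \<in> L" using si s uL unfolding sym_invariant_def by blast
  moreover have "perm_act \<sigma> u \<noteq> (\<lambda>_. 0)"
    using perm_act_inv[OF s, of u] perm_act_zero[of "inv \<sigma>"] uL(2) by metis
  moreover have "\<not> (\<exists>w \<in> L - {\<lambda>_. 0}. conformal_le w (perm_act \<sigma> u) \<and> w \<noteq> perm_act \<sigma> u)"
  proof
    assume "\<exists>w \<in> L - {\<lambda>_. 0}. conformal_le w (perm_act \<sigma> u) \<and> w \<noteq> perm_act \<sigma> u"
    then obtain w where w: "w \<in> L" "w \<noteq> (\<lambda>_. 0)" "conformal_le w (perm_act \<sigma> u)" "w \<noteq> perm_act \<sigma> u" by blast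
    define w' where "w' = perm_act (inv \<sigma>) w"
    have "w' \<in> L" using si Sym_inv[OF s] w(1) unfolding sym_invariant_def w'_def by blast
    moreover have "w' \<noteq> (\<lambda>_. 0)"
    proof
      assume "w' = (\<lambda>_. 0)"
      then have "perm_act \<sigma> w' = (\<lambda>_. 0)" by (simp add: perm_act_zero)
      moreover have "perm_act \<sigma> w' = w"
        using perm_act_inv[OF Sym_inv[OF s], of w] s unfolding w'_def Sym_def
        by (auto simp: inv_inv_eq)
      ultimately show False using w(2) by simp
    qed
    moreover have "conformal_le w' u"
      using perm_act_conf[OF w(3), of "inv \<sigma>"] perm_act_inv[OF s, of u] unfolding w'_def by simp
    moreover have "w' \<noteq> u"
    proof
      assume "w' = u"
      then have "perm_act \<sigma> w' = perm_act \<sigma> u" by simp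
      moreover have "perm_act \<sigma> w' = w"
        using perm_act_inv[OF Sym_inv[OF s], of w] s unfolding w'_def Sym_def
        by (auto simp: inv_inv_eq)
      ultimately show False using w(4) by simp
    qed
    ultimately show False using um by blast
  qed
  ultimately show ?thesis unfolding graver_def by blast
qed

theorem theorem4p1:
  fixes c :: nat and L :: "(nat \<times> nat \<Rightarrow> int) set"
  assumes "c \<ge> 1" and "is_lattice c L" and "sym_invariant L"
  shows "\<exists>G. finite G \<and> G \<subseteq> L \<and>
           {perm_act \<sigma> u | \<sigma> u. \<sigma> \<in> Sym \<and> u \<in> G} = graver L"
proof (rule ccontr)
  assume nex: "\<not> ?thesis"
  have LZ: "L \<subseteq> ZI c" using assms(2) unfolding is_lattice_def by auto
  define orb where "orb G = {perm_act \<sigma> u | \<sigma> u. \<sigma> \<in> Sym \<and> u \<in> G}" for G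
  have orb_sub: "orb G \<subseteq> graver L" if "G \<subseteq> graver L" for G
    using that graver_inv[OF assms(3)] unfolding orb_def by blast
  have exn: "\<exists>x. x \<in> graver L \<and> x \<notin> orb G" if "finite G" "G \<subseteq> graver L" for G
  proof -
    have "orb G \<noteq> graver L" using nex that graver_sub unfolding orb_def by blast
    then show ?thesis using orb_sub[OF that(2)] by blast
  qed
  define pick where "pick G = (SOME x. x \<in> graver L \<and> x \<notin> orb G)" for G
  have pick: "pick G \<in> graver L \<and> pick G \<notin> orb G" if "finite G" "G \<subseteq> graver L" for G
    unfolding pick_def using someI_ex[OF exn[OF that]] .
  define F where "F = rec_nat {} (\<lambda>n X. insert (pick X) X)"
  have F0: "F 0 = {}" and FS: "F (Suc n) = insert (pick (F n)) (F n)" for n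
    unfolding F_def by simp_all
  have Fp: "finite (F n) \<and> F n \<subseteq> graver L" for n
  proof (induction n)
    case 0 then show ?case by (simp add: F0)
  next
    case (Suc n) then show ?case using pick[of "F n"] by (simp add: FS)
  qed
  define f where "f n = pick (F n)" for n
  have fG: "f n \<in> graver L" and fno: "f n \<notin> orb (F n)" for n
    using pick[of "F n"] Fp[of n] unfolding f_def by auto
  have fin: "f i \<in> F j" if "i < j" for i j
    using that
  proof (induction j)
    case 0 then show ?case by simp
  next
    case (Suc j) then show ?case by (auto simp: FS f_def less_Suc_eq)
  qed
  have fZ: "f n \<in> ZI c" for n using fG[of n] graver_sub LZ by blast
  have "wqo_on (list_emb conf) (lists (colA {1..c}))" by (rule higman[OF colA_wqo]) simp
  then have "good (list_emb conf) (\<lambda>n. cols (f n))"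
    unfolding wqo_on_def using cols_lists[OF fZ] by simp
  then obtain i j where ij: "i < j" "list_emb conf (cols (f i)) (cols (f j))" unfolding good_def by blast
  obtain \<sigma> where s: "\<sigma> \<in> Sym" and le: "conformal_le (perm_act \<sigma> (f i)) (f j)"
    using emb_perm[OF fZ fZ ij(2)] by blast
  have "perm_act \<sigma> (f i) \<in> graver L" using graver_inv[OF assms(3) s fG] .
  then have "perm_act \<sigma> (f i) \<in> L - {\<lambda>_. 0}" unfolding graver_def by blast
  moreover have "\<not> (\<exists>v \<in> L - {\<lambda>_. 0}. conformal_le v (f j) \<and> v \<noteq> f j)"
    using fG[of j] unfolding graver_def by blast
  ultimately have "perm_act \<sigma> (f i) = f j" using le by blast
  then have "f j \<in> orb (F j)" unfolding orb_def using s fin[OF ij(1)] by (metis (mono_tags, lifting) mem_Collect_eq)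
  then show False using fno by blast
qed

end
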